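(* Let $u\in\mathbb{Z}^2$, $d\ge0$ and let $\Psi\subset\mathbb{Z}^2$ be a random set. Let $E$ be the event that there is a $\boxtimes$-path in $\mathbb{Z}^2\setminus\Psi$ starting at $u$ and ending at some $v$ with $\|v-u\|_\infty\ge d$. Then $$\mathbb{P}(E)\le\Big(\frac{\mathfrak p(\Psi)}{\varepsilon_0}\Big)^{1+d}.$$
   Context: $\varepsilon_0=1/21$. $\square$-adjacency on $\mathbb{Z}^2$: $\|u-v\|_1=1$; $\boxtimes$-adjacency: $\|u-v\|_\infty=1$. A random set $B\subset\mathbb{Z}^2$ on a probability space $(\cdot,\mathbb{P})$ is $\varepsilon$-rare if $\mathbb{P}(A\subset B)\le\varepsilon^{\#A}$ for every finite $A$. A random set $\Psi\subset\mathbb{Z}^2$ is $\varepsilon$-strongly percolating if either $\varepsilon\ge\varepsilon_0$ or there is an $\varepsilon$-rare random set $B$ on the same probability space such that $\Psi$ almost surely contains an infinite $\square$-connected component of $\mathbb{Z}^2\setminus B$. $\mathfrak p(\Psi)=\inf\{\varepsilon\ge0:\Psi\text{ is }\varepsilon\text{-strongly percolating}\}$. *)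

theory Defs
  imports "HOL-Probability.Probability"
begin

type_synonym pt = "int \<times> int"

definition eps0 :: real where "eps0 = 1 / 21"

definition norm1 :: "pt \<Rightarrow> int" where
  "norm1 z = \<bar>fst z\<bar> + \<bar>snd z\<bar>"

definition normInf :: "pt \<Rightarrow> int" where
  "normInf z = max \<bar>fst z\<bar> \<bar>snd z\<bar>"

definition sq_adj :: "pt \<Rightarrow> pt \<Rightarrow> bool" where
  "sq_adj u v \<longleftrightarrow> norm1 (u - v) = 1"

definition bx_adj :: "pt \<Rightarrow> pt \<Rightarrow> bool" where
  "bx_adj u v \<longleftrightarrow> normInf (u - v) = 1"

definition component :: "(pt \<Rightarrow> pt \<Rightarrow> bool) \<Rightarrow> pt set \<Rightarrow> pt \<Rightarrow> pt set" where
  "component adj S x = {y. (\<lambda>a b. a \<in> S \<and> b \<in> S \<and> adj a b)\<^sup>*\<^sup>* x y}"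

definition random_set :: "'a measure \<Rightarrow> ('a \<Rightarrow> pt set) \<Rightarrow> bool" where
  "random_set M B \<longleftrightarrow> (\<forall>z. {\<omega> \<in> space M. z \<in> B \<omega>} \<in> sets M)"

definition rare :: "'a measure \<Rightarrow> real \<Rightarrow> ('a \<Rightarrow> pt set) \<Rightarrow> bool" where
  "rare M \<epsilon> B \<longleftrightarrow> random_set M B \<and>
     (\<forall>A. finite A \<longrightarrow> measure M {\<omega> \<in> space M. A \<subseteq> B \<omega>} \<le> \<epsilon> ^ card A)"

definition strongly_percolating :: "'a measure \<Rightarrow> real \<Rightarrow> ('a \<Rightarrow> pt set) \<Rightarrow> bool" where
  "strongly_percolating M \<epsilon> \<Psi> \<longleftrightarrow> \<epsilon> \<ge> eps0 \<or>
     (\<exists>B. rare M \<epsilon> B \<and>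
        (AE \<omega> in M. \<exists>x. x \<notin> B \<omega> \<and> infinite (component sq_adj (- B \<omega>) x)
                      \<and> component sq_adj (- B \<omega>) x \<subseteq> \<Psi> \<omega>))"

definition perc :: "'a measure \<Rightarrow> ('a \<Rightarrow> pt set) \<Rightarrow> real" where
  "perc M \<Psi> = Inf {\<epsilon>. \<epsilon> \<ge> 0 \<and> strongly_percolating M \<epsilon> \<Psi>}"

definition bx_path_avoiding :: "pt set \<Rightarrow> pt list \<Rightarrow> bool" where
  "bx_path_avoiding S p \<longleftrightarrow> p \<noteq> [] \<and> (\<forall>z\<in>set p. z \<notin> S) \<and> successively bx_adj p"

end

theory Submission
  imports Defs
begin

lemma sq_adj_sym: "sq_adj a b \<Longrightarrow> sq_adj b a"
  by (auto simp: sq_adj_def norm1_def)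
lemma bx_adj_sym: "bx_adj a b \<Longrightarrow> bx_adj b a"
  by (auto simp: bx_adj_def normInf_def)
lemma sq_imp_bx: "sq_adj a b \<Longrightarrow> bx_adj a b"
  by (auto simp: sq_adj_def bx_adj_def norm1_def normInf_def)
lemma normInf_tri: "normInf (a + b) \<le> normInf a + normInf b"
  by (auto simp: normInf_def)
lemma normInf_minus_tri: "normInf (a - c) \<le> normInf (a - b) + normInf (b - c)"
  by (auto simp: normInf_def)
lemma normInf_sym: "normInf (a - b) = normInf (b - a)"
  by (auto simp: normInf_def)
lemma normInf_ge0: "normInf a \<ge> 0" by (auto simp: normInf_def)

lemma comp_self: "x \<in> component adj S x"
  by (simp add: component_def)
lemma comp_in: "y \<in> component adj S x \<Longrightarrow> x \<in> S \<Longrightarrow> y \<in> S"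
proof -
  assume "y \<in> component adj S x" "x \<in> S"
  then have "(\<lambda>a b. a \<in> S \<and> b \<in> S \<and> adj a b)\<^sup>*\<^sup>* x y" by (simp add: component_def)
  then show ?thesis using \<open>x \<in> S\<close> by (induction rule: rtranclp_induct) auto
qed
lemma comp_step: "y \<in> component adj S x \<Longrightarrow> x \<in> S \<Longrightarrow> z \<in> S \<Longrightarrow> adj y z \<Longrightarrow> z \<in> component adj S x"
  using comp_in[of y adj S x] unfolding component_def
  by (simp add: rtranclp.rtrancl_into_rtrancl)
lemma comp_within:
  assumes "y \<in> component adj S x" "x \<in> S"
  shows "(\<lambda>a b. a \<in> component adj S x \<and> b \<in> component adj S x \<and> adj a b)\<^sup>*\<^sup>* x y"
proof -
  have "(\<lambda>a b. a \<in> S \<and> b \<in> S \<and> adj a b)\<^sup>*\<^sup>* x y" using assms(1) by (simp add: component_def)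
  then show ?thesis
  proof (induction rule: rtranclp_induct)
    case base then show ?case by simp
  next
    case (step y z)
    then have "z \<in> component adj S x" "y \<in> component adj S x"
      unfolding component_def by (auto intro: rtranclp.rtrancl_into_rtrancl)
    with step show ?case by (auto intro: rtranclp.rtrancl_into_rtrancl)
  qed
qed

definition sqr :: "pt \<Rightarrow> (real \<times> real) set" where
  "sqr z = {real_of_int (fst z) .. real_of_int (fst z) + 1} \<times> {real_of_int (snd z) .. real_of_int (snd z) + 1}"

lemma sqr_connected: "connected (sqr z)"
  unfolding sqr_def by (intro convex_connected convex_Times) auto
lemma sqr_closed: "closed (sqr z)"
  unfolding sqr_def by (intro closed_Times) auto
lemma sqr_mem: "p \<in> sqr (\<lfloor>fst p\<rfloor>, \<lfloor>snd p\<rfloor>)"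
  unfolding sqr_def by (cases p) (auto simp: mem_Times_iff)
lemma sqr_meet: "p \<in> sqr a \<Longrightarrow> p \<in> sqr b \<Longrightarrow> normInf (a - b) \<le> 1"
proof -
  assume "p \<in> sqr a" "p \<in> sqr b"
  then have "real_of_int (fst a) \<le> real_of_int (fst b) + 1" "real_of_int (fst b) \<le> real_of_int (fst a) + 1"
    "real_of_int (snd a) \<le> real_of_int (snd b) + 1" "real_of_int (snd b) \<le> real_of_int (snd a) + 1"
    by (auto simp: sqr_def mem_Times_iff)
  then have "fst a \<le> fst b + 1" "fst b \<le> fst a + 1" "snd a \<le> snd b + 1" "snd b \<le> snd a + 1"
    by linarith+
  then show ?thesis by (auto simp: normInf_def)
qed
lemma sqr_mix: "p \<in> sqr a \<Longrightarrow> p \<in> sqr b \<Longrightarrow> p \<in> sqr (fst b, snd a)"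
  by (auto simp: sqr_def mem_Times_iff)
lemma bx_sqr_meet: "normInf (a - b) \<le> 1 \<Longrightarrow> sqr a \<inter> sqr b \<noteq> {}"
proof -
  assume h: "normInf (a - b) \<le> 1"
  let ?p = "(real_of_int (max (fst a) (fst b)), real_of_int (max (snd a) (snd b)))"
  from h have i: "fst a \<le> fst b + 1" "fst b \<le> fst a + 1" "snd a \<le> snd b + 1" "snd b \<le> snd a + 1"
    by (auto simp: normInf_def)
  have "real_of_int (fst a) \<le> real_of_int (fst b) + 1" "real_of_int (fst b) \<le> real_of_int (fst a) + 1"
    "real_of_int (snd a) \<le> real_of_int (snd b) + 1" "real_of_int (snd b) \<le> real_of_int (snd a) + 1"
    using i by linarith+
  then have "?p \<in> sqr a \<and> ?p \<in> sqr b"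
    by (auto simp: sqr_def mem_Times_iff max_def)
  then show ?thesis by blast
qed

lemma closed_Union_sqr: "closed (\<Union>(sqr ` A))"
proof -
  have "locally_finite_in euclidean (sqr ` A)"
    unfolding locally_finite_in_def
  proof (intro conjI ballI)
    fix x :: "real \<times> real"
    let ?F = "{\<lfloor>fst x\<rfloor> - 2 .. \<lfloor>fst x\<rfloor> + 2} \<times> {\<lfloor>snd x\<rfloor> - 2 .. \<lfloor>snd x\<rfloor> + 2}"
    have "{U \<in> sqr ` A. U \<inter> ball x 1 \<noteq> {}} \<subseteq> sqr ` ?F"
    proof
      fix U assume "U \<in> {U \<in> sqr ` A. U \<inter> ball x 1 \<noteq> {}}"
      then obtain z where U: "U = sqr z" and "sqr z \<inter> ball x 1 \<noteq> {}" by auto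
      then obtain q where q: "q \<in> sqr z" "dist x q < 1" by auto
      have "dist (fst x) (fst q) < 1" "dist (snd x) (snd q) < 1"
        using q(2) dist_fst_le[of x q] dist_snd_le[of x q] by linarith+
      moreover have "real_of_int (fst z) \<le> fst q" "fst q \<le> real_of_int (fst z) + 1"
         "real_of_int (snd z) \<le> snd q" "snd q \<le> real_of_int (snd z) + 1"
        using q(1) by (auto simp: sqr_def mem_Times_iff)
      ultimately have a: "real_of_int (fst z) < fst x + 1" "fst x < real_of_int (fst z) + 2"
          "real_of_int (snd z) < snd x + 1" "snd x < real_of_int (snd z) + 2"
        by (auto simp: dist_real_def abs_less_iff)
      have "fst z - 1 \<le> \<lfloor>fst x\<rfloor>" "\<lfloor>fst x\<rfloor> < fst z + 2"
        "snd z - 1 \<le> \<lfloor>snd x\<rfloor>" "\<lfloor>snd x\<rfloor> < snd z + 2"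
        using a by (simp_all add: le_floor_iff floor_less_iff)
      then have "z \<in> ?F" by (cases z) auto
      then show "U \<in> sqr ` ?F" using U by blast
    qed
    then have "finite {U \<in> sqr ` A. U \<inter> ball x 1 \<noteq> {}}"
      by (rule finite_subset) auto
    then show "\<exists>V. openin euclidean V \<and> x \<in> V \<and> finite {U \<in> sqr ` A. U \<inter> V \<noteq> {}}"
      by (intro exI[of _ "ball x 1"]) auto
  qed auto
  then show ?thesis
    using closedin_locally_finite_Union[of "sqr ` A" euclidean] sqr_closed
    unfolding closed_closedin by blast
qed

lemma sqr_chain:
  assumes "(\<lambda>a b. a \<in> A \<and> b \<in> A \<and> bx_adj a b)\<^sup>*\<^sup>* a b" "a \<in> A"
  shows "\<exists>X. connected X \<and> X \<subseteq> \<Union>(sqr ` A) \<and> sqr a \<subseteq> X \<and> sqr b \<subseteq> X"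
  using assms
proof (induction rule: rtranclp_induct)
  case base then show ?case using sqr_connected by blast
next
  case (step b c)
  then obtain X where X: "connected X" "X \<subseteq> \<Union>(sqr ` A)" "sqr a \<subseteq> X" "sqr b \<subseteq> X" by blast
  have "sqr b \<inter> sqr c \<noteq> {}" using step(2) bx_sqr_meet by (auto simp: bx_adj_def)
  then have "connected (X \<union> sqr c)" using X sqr_connected by (intro connected_Un) auto
  with X step(2) show ?case by (intro exI[of _ "X \<union> sqr c"]) auto
qed

lemma connected_Union_sqr:
  assumes "z0 \<in> A" "\<And>z. z \<in> A \<Longrightarrow> (\<lambda>a b. a \<in> A \<and> b \<in> A \<and> bx_adj a b)\<^sup>*\<^sup>* z0 z"
  shows "connected (\<Union>(sqr ` A))"
proof -
  have "\<forall>z\<in>A. \<exists>X. connected X \<and> X \<subseteq> \<Union>(sqr ` A) \<and> sqr z0 \<subseteq> X \<and> sqr z \<subseteq> X"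
    using sqr_chain assms by blast
  then obtain X where X: "\<And>z. z \<in> A \<Longrightarrow> connected (X z) \<and> X z \<subseteq> \<Union>(sqr ` A) \<and> sqr z0 \<subseteq> X z \<and> sqr z \<subseteq> X z"
    by metis
  have eq: "\<Union>(sqr ` A) = \<Union>(X ` A)" using X by blast
  have "(real_of_int (fst z0), real_of_int (snd z0)) \<in> sqr z0" by (auto simp: sqr_def)
  then have "\<Inter>(X ` A) \<noteq> {}" using X by blast
  then show ?thesis unfolding eq using X by (intro connected_Union) auto
qed

lemma rt_sym: assumes "\<And>a b. R a b \<Longrightarrow> R b a" "R\<^sup>*\<^sup>* x y" shows "R\<^sup>*\<^sup>* y x"
proof -
  have "symp R" using assms(1) by (intro sympI)
  then have "symp R\<^sup>*\<^sup>*" by (rule symp_rtranclp)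
  then show ?thesis using assms(2) by (meson sympD)
qed

lemma normInf_zero: "normInf z = 0 \<Longrightarrow> z = 0"
  by (cases z) (auto simp: normInf_def max_def zero_prod_def split: if_splits)

lemma staircase: "(\<lambda>a b. sq_adj a b)\<^sup>*\<^sup>* z w"
proof -
  have "\<forall>z w. norm1 (w - z) = int n \<longrightarrow> (\<lambda>a b. sq_adj a b)\<^sup>*\<^sup>* z w" for n
  proof (induction n)
    case 0
    have *: "\<bar>a\<bar> + \<bar>b\<bar> = (0::int) \<Longrightarrow> a = 0 \<and> b = 0" for a b by arith
    show ?case
    proof (intro allI impI)
      fix z w :: pt assume "norm1 (w - z) = int 0"
      then have "w = z" using *[of "fst w - fst z" "snd w - snd z"] by (auto simp: norm1_def prod_eq_iff)
      then show "(\<lambda>a b. sq_adj a b)\<^sup>*\<^sup>* z w" by simp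
    qed
  next
    case (Suc n)
    show ?case
    proof (intro allI impI)
      fix z w :: pt assume h: "norm1 (w - z) = int (Suc n)"
      define z' where "z' = (if fst w \<noteq> fst z then z + (sgn (fst w - fst z), 0) else z + (0, sgn (snd w - snd z)))"
      have "sq_adj z z'" "norm1 (w - z') = int n"
        using h by (auto simp: z'_def sq_adj_def norm1_def sgn_if)
      then show "(\<lambda>a b. sq_adj a b)\<^sup>*\<^sup>* z w" using Suc.IH
        by (meson converse_rtranclp_into_rtranclp)
    qed
  qed
  moreover have "norm1 (w - z) = int (nat (norm1 (w - z)))" by (simp add: norm1_def)
  ultimately show ?thesis by blast
qed

lemma escape:
  assumes "(\<lambda>a b. sq_adj a b)\<^sup>*\<^sup>* a b" "a \<notin> C" "b \<in> C"
  shows "\<exists>p q. p \<notin> C \<and> q \<in> C \<and> sq_adj p q \<and> (\<lambda>x y. x \<notin> C \<and> y \<notin> C \<and> sq_adj x y)\<^sup>*\<^sup>* a p"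
  using assms
proof (induction rule: converse_rtranclp_induct)
  case base then show ?case by simp
next
  case (step a a')
  show ?case
  proof (cases "a' \<in> C")
    case True then show ?thesis using step by blast
  next
    case False
    from step.IH[OF False step.prems(2)] obtain p q where pq: "p \<notin> C" "q \<in> C" "sq_adj p q"
      and path: "(\<lambda>x y. x \<notin> C \<and> y \<notin> C \<and> sq_adj x y)\<^sup>*\<^sup>* a' p"
      by blast
    have "(\<lambda>x y. x \<notin> C \<and> y \<notin> C \<and> sq_adj x y) a a'" using step.prems(1) False step.hyps(1) by simp
    then have "(\<lambda>x y. x \<notin> C \<and> y \<notin> C \<and> sq_adj x y)\<^sup>*\<^sup>* a p" using path
      by (rule converse_rtranclp_into_rtranclp)
    then show ?thesis using pq by blast
  qed
qed

locale setting =
  fixes Bs :: "pt set" and C :: "pt set" and u :: pt and c0 :: pt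
  assumes C_inf: "infinite C"
  and c0C: "c0 \<in> C"
  and C_conn: "\<And>z. z \<in> C \<Longrightarrow> (\<lambda>a b. a \<in> C \<and> b \<in> C \<and> sq_adj a b)\<^sup>*\<^sup>* c0 z"
  and C_bd: "\<And>w c. c \<in> C \<Longrightarrow> w \<notin> C \<Longrightarrow> sq_adj c w \<Longrightarrow> w \<in> Bs"
  and u_notC: "u \<notin> C"
begin

definition "W = component bx_adj (- C) u"
definition "bd = {w \<in> W. \<exists>c\<in>C. sq_adj w c}"

lemma u_W: "u \<in> W" unfolding W_def by (rule comp_self)
lemma W_notC: "w \<in> W \<Longrightarrow> w \<notin> C"
  using comp_in[of w bx_adj "- C" u] u_notC unfolding W_def by auto
lemma W_step: "w \<in> W \<Longrightarrow> z \<notin> C \<Longrightarrow> bx_adj w z \<Longrightarrow> z \<in> W"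
  unfolding W_def using comp_step[of w bx_adj "- C" u z] u_notC by auto
lemma K: "w \<in> W \<Longrightarrow> z \<notin> W \<Longrightarrow> sq_adj w z \<Longrightarrow> z \<in> C"
  using W_step sq_imp_bx by blast
lemma bd_B: "bd \<subseteq> Bs"
  using C_bd W_notC sq_adj_sym unfolding bd_def by blast
lemma bd_W: "bd \<subseteq> W" unfolding bd_def by blast

lemma W_paths: "z \<in> W \<Longrightarrow> (\<lambda>a b. a \<in> W \<and> b \<in> W \<and> bx_adj a b)\<^sup>*\<^sup>* u z"
  unfolding W_def using comp_within[of z bx_adj "- C" u] u_notC by auto

lemma notW_paths:
  assumes "z \<notin> W"
  shows "(\<lambda>a b. a \<notin> W \<and> b \<notin> W \<and> bx_adj a b)\<^sup>*\<^sup>* z c0"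
proof -
  let ?R = "\<lambda>a b. a \<notin> W \<and> b \<notin> W \<and> bx_adj a b"
  have sym: "\<And>a b. ?R a b \<Longrightarrow> ?R b a" using bx_adj_sym by blast
  have Cpath: "?R\<^sup>*\<^sup>* q c0" if "q \<in> C" for q
  proof -
    have "(\<lambda>a b. a \<in> C \<and> b \<in> C \<and> sq_adj a b)\<^sup>*\<^sup>* c0 q" using C_conn that by blast
    then have "?R\<^sup>*\<^sup>* c0 q"
      by (rule rtranclp_mono[THEN predicate2D, rotated]) (auto dest: W_notC sq_imp_bx)
    then show ?thesis using rt_sym[of ?R c0 q] sym by blast
  qed
  show ?thesis
  proof (cases "z \<in> C")
    case True then show ?thesis using Cpath by blast
  next
    case False
    obtain p q where pq: "p \<notin> C" "q \<in> C" "sq_adj p q" and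
      path: "(\<lambda>x y. x \<notin> C \<and> y \<notin> C \<and> sq_adj x y)\<^sup>*\<^sup>* z p"
      using escape[OF staircase False c0C] by blast
    have "?R\<^sup>*\<^sup>* z p \<and> p \<notin> W"
      using path
    proof (induction rule: rtranclp_induct)
      case base then show ?case using assms by simp
    next
      case (step y y')
      then have "y' \<notin> W" using W_step[of y' y] bx_adj_sym sq_imp_bx by blast
      with step show ?case by (auto intro: rtranclp.rtrancl_into_rtrancl sq_imp_bx)
    qed
    moreover have "?R p q" using pq W_notC sq_imp_bx calculation by blast
    ultimately have "?R\<^sup>*\<^sup>* z q" by (blast intro: rtranclp.rtrancl_into_rtrancl)
    then show ?thesis using Cpath[OF pq(2)] by (meson rtranclp_trans)
  qed
qed

end

lemma sq_normInf: "sq_adj a b \<Longrightarrow> normInf (a - b) \<le> 1"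
  by (auto simp: sq_adj_def norm1_def normInf_def)

context setting begin

lemma cover:
  assumes "p \<in> \<Union>(sqr ` W)" "p \<in> \<Union>(sqr ` (-W))"
  shows "\<exists>w\<in>bd. p \<in> sqr w"
proof -
  from assms obtain w z where w: "w \<in> W" "p \<in> sqr w" and z: "z \<notin> W" "p \<in> sqr z" by auto
  have nz: "normInf (w - z) \<le> 1" using sqr_meet w z by blast
  define m where "m = (fst z, snd w)"
  have pm: "p \<in> sqr m" using sqr_mix[OF w(2) z(2)] m_def by simp
  show ?thesis
  proof (cases "m \<in> W")
    case True
    then have "m \<noteq> z" using z by auto
    then have "sq_adj m z" using nz
      by (auto simp: m_def sq_adj_def norm1_def normInf_def prod_eq_iff)
    then have "z \<in> C" using K True z by blast
    then have "m \<in> bd" using True \<open>sq_adj m z\<close> by (auto simp: bd_def)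
    then show ?thesis using pm by blast
  next
    case False
    then have "m \<noteq> w" using w by auto
    then have "sq_adj w m" using nz
      by (auto simp: m_def sq_adj_def norm1_def normInf_def prod_eq_iff)
    then have "m \<in> C" using K w False by blast
    then have "w \<in> bd" using w \<open>sq_adj w m\<close> by (auto simp: bd_def)
    then show ?thesis using w by blast
  qed
qed

lemma bd_pt: "r \<in> bd \<Longrightarrow> \<exists>p. p \<in> sqr r \<and> p \<in> \<Union>(sqr ` W) \<and> p \<in> \<Union>(sqr ` (-W))"
proof -
  assume "r \<in> bd"
  then obtain c where c: "r \<in> W" "c \<in> C" "sq_adj r c" by (auto simp: bd_def)
  then obtain p where "p \<in> sqr r" "p \<in> sqr c" using bx_sqr_meet[OF sq_normInf[OF c(3)]] by blast
  moreover have "c \<notin> W" using c W_notC by blast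
  ultimately show ?thesis using c by blast
qed

lemma bd_conn:
  assumes r: "r \<in> bd" and y: "y \<in> bd"
  shows "(\<lambda>a b. a \<in> bd \<and> b \<in> bd \<and> bx_adj a b)\<^sup>*\<^sup>* r y"
proof (rule ccontr)
  let ?R = "\<lambda>a b. a \<in> bd \<and> b \<in> bd \<and> bx_adj a b"
  assume ny: "\<not> ?R\<^sup>*\<^sup>* r y"
  define X where "X = {z \<in> bd. ?R\<^sup>*\<^sup>* r z}"
  define Y where "Y = bd - X"
  define S where "S = \<Union>(sqr ` W)"
  define T where "T = \<Union>(sqr ` (-W))"
  have ST: "UNIV = S \<union> T"
  proof -
    have "p \<in> S \<union> T" for p using sqr_mem[of p] unfolding S_def T_def by blast
    then show ?thesis by blast
  qed
  have cS: "connected S" unfolding S_def by (rule connected_Union_sqr[OF u_W W_paths])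
  have cT: "connected T" unfolding T_def
  proof (rule connected_Union_sqr)
    show "c0 \<in> - W" using c0C W_notC by blast
    fix z assume "z \<in> - W"
    then have "(\<lambda>a b. a \<notin> W \<and> b \<notin> W \<and> bx_adj a b)\<^sup>*\<^sup>* z c0" using notW_paths by blast
    then have "(\<lambda>a b. a \<notin> W \<and> b \<notin> W \<and> bx_adj a b)\<^sup>*\<^sup>* c0 z"
      using rt_sym[of "\<lambda>a b. a \<notin> W \<and> b \<notin> W \<and> bx_adj a b" z c0] bx_adj_sym by blast
    then show "(\<lambda>a b. a \<in> - W \<and> b \<in> - W \<and> bx_adj a b)\<^sup>*\<^sup>* c0 z" by simp
  qed
  have clS: "closed S" "closed T" unfolding S_def T_def by (rule closed_Union_sqr)+
  have cST: "connected (S \<inter> T)"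
    by (rule unicoherentD[OF unicoherent_UNIV cS cT ST]) (simp_all add: clS)
  define A1 where "A1 = \<Union>(sqr ` X) \<inter> (S \<inter> T)"
  define A2 where "A2 = \<Union>(sqr ` Y) \<inter> (S \<inter> T)"
  have clA: "closed A1" "closed A2" unfolding A1_def A2_def
    using clS closed_Union_sqr by (auto intro!: closed_Int)
  have un: "A1 \<union> A2 = S \<inter> T"
  proof
    show "A1 \<union> A2 \<subseteq> S \<inter> T" unfolding A1_def A2_def by blast
    show "S \<inter> T \<subseteq> A1 \<union> A2"
    proof
      fix p assume p: "p \<in> S \<inter> T"
      then obtain w where w: "w \<in> bd" "p \<in> sqr w" using cover[of p] unfolding S_def T_def by blast
      show "p \<in> A1 \<union> A2"
      proof (cases "w \<in> X")
        case True then have "p \<in> \<Union>(sqr ` X)" using w by blast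
        then show ?thesis using p unfolding A1_def by blast
      next
        case False then have "w \<in> Y" using w Y_def by blast
        then have "p \<in> \<Union>(sqr ` Y)" using w by blast
        then show ?thesis using p unfolding A2_def by blast
      qed
    qed
  qed
  have dis: "A1 \<inter> A2 = {}"
  proof (rule ccontr)
    assume "A1 \<inter> A2 \<noteq> {}"
    then obtain p where "p \<in> \<Union>(sqr ` X)" "p \<in> \<Union>(sqr ` Y)" unfolding A1_def A2_def by blast
    then obtain x y' where x: "x \<in> X" "p \<in> sqr x" and y': "y' \<in> Y" "p \<in> sqr y'" by blast
    have "x \<noteq> y'" using x(1) y'(1) unfolding Y_def by blast
    then have "normInf (x - y') \<noteq> 0" using normInf_zero[of "x - y'"] by auto
    moreover have "normInf (x - y') \<le> 1" using sqr_meet x y' by blast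
    moreover have "normInf (x - y') \<ge> 0" by (rule normInf_ge0)
    ultimately have bx: "bx_adj x y'" by (simp add: bx_adj_def)
    have xX: "x \<in> bd" "?R\<^sup>*\<^sup>* r x" using x(1) unfolding X_def by auto
    have yb: "y' \<in> bd" using y'(1) unfolding Y_def by blast
    then have "?R x y'" using xX bx by blast
    with xX(2) have "?R\<^sup>*\<^sup>* r y'" by (rule rtranclp.rtrancl_into_rtrancl)
    then have "y' \<in> X" unfolding X_def using yb by blast
    then show False using y'(1) unfolding Y_def by blast
  qed
  have ne1: "A1 \<noteq> {}"
  proof -
    have "r \<in> X" using r X_def by simp
    obtain p where p: "p \<in> sqr r" "p \<in> S" "p \<in> T" using bd_pt[OF r] unfolding S_def T_def by blast
    then have "p \<in> A1" using \<open>r \<in> X\<close> unfolding A1_def by blast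
    then show ?thesis by blast
  qed
  have ne2: "A2 \<noteq> {}"
  proof -
    have "y \<in> Y" using y ny X_def Y_def by simp
    obtain p where p: "p \<in> sqr y" "p \<in> S" "p \<in> T" using bd_pt[OF y] unfolding S_def T_def by blast
    then have "p \<in> A2" using \<open>y \<in> Y\<close> unfolding A2_def by blast
    then show ?thesis by blast
  qed
  have cl: "closed (S \<inter> T)" using clS by (rule closed_Int)
  have "\<exists>A B. closed A \<and> closed B \<and> A \<noteq> {} \<and> B \<noteq> {} \<and> A \<union> B = S \<inter> T \<and> A \<inter> B = {}"
    by (intro exI[of _ A1] exI[of _ A2]) (simp add: clA ne1 ne2 un dis)
  then show False using cST connected_closed_set[OF cl] by blast
qed

end

lemma box_finite: "finite {z::pt. normInf (z - u) \<le> R}"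
proof -
  have "{z::pt. normInf (z - u) \<le> R} \<subseteq> {fst u - R .. fst u + R} \<times> {snd u - R .. snd u + R}"
    by (auto simp: normInf_def)
  then show ?thesis by (rule finite_subset) auto
qed

context setting begin

lemma out_nbr:
  assumes R: "\<And>w. w \<in> bd \<Longrightarrow> normInf (w - u) \<le> R"
  and z: "z \<in> W" "normInf (z - u) > R" and n: "sq_adj z n"
  shows "n \<in> W"
proof (rule ccontr)
  assume "n \<notin> W"
  then have "n \<in> C" using K z n by blast
  then have "z \<in> bd" using z n by (auto simp: bd_def)
  then show False using R z by fastforce
qed

lemma vline:
  assumes R: "\<And>w. w \<in> bd \<Longrightarrow> normInf (w - u) \<le> R"
  and z: "z \<in> W" "\<bar>fst z - fst u\<bar> > R"
  shows "(fst z, t) \<in> W"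
proof -
  have out: "normInf ((fst z, s) - u) > R" for s using z(2) by (auto simp: normInf_def)
  have "(fst z, snd z + int n) \<in> W \<and> (fst z, snd z - int n) \<in> W" for n
  proof (induction n)
    case 0 then show ?case using z(1) by simp
  next
    case (Suc n)
    have a: "sq_adj (fst z, snd z + int n) (fst z, snd z + int (Suc n))"
      "sq_adj (fst z, snd z - int n) (fst z, snd z - int (Suc n))"
      by (auto simp: sq_adj_def norm1_def)
    show ?case using out_nbr[OF R _ out a(1)] out_nbr[OF R _ out a(2)] Suc by blast
  qed
  moreover have "t = snd z + int (nat (t - snd z)) \<or> t = snd z - int (nat (snd z - t))" by auto
  ultimately show ?thesis by metis
qed

lemma hline:
  assumes R: "\<And>w. w \<in> bd \<Longrightarrow> normInf (w - u) \<le> R"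
  and z: "z \<in> W" "\<bar>snd z - snd u\<bar> > R"
  shows "(t, snd z) \<in> W"
proof -
  have out: "normInf ((s, snd z) - u) > R" for s using z(2) by (auto simp: normInf_def)
  have "(fst z + int n, snd z) \<in> W \<and> (fst z - int n, snd z) \<in> W" for n
  proof (induction n)
    case 0 then show ?case using z(1) by simp
  next
    case (Suc n)
    have a: "sq_adj (fst z + int n, snd z) (fst z + int (Suc n), snd z)"
      "sq_adj (fst z - int n, snd z) (fst z - int (Suc n), snd z)"
      by (auto simp: sq_adj_def norm1_def)
    show ?case using out_nbr[OF R _ out a(1)] out_nbr[OF R _ out a(2)] Suc by blast
  qed
  moreover have "t = fst z + int (nat (t - fst z)) \<or> t = fst z - int (nat (fst z - t))" by auto
  ultimately show ?thesis by metis
qed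

lemma W_bounded:
  assumes R: "\<And>w. w \<in> bd \<Longrightarrow> normInf (w - u) \<le> R"
  shows "w \<in> W \<Longrightarrow> normInf (w - u) \<le> R"
proof (rule ccontr)
  assume w: "w \<in> W" "\<not> normInf (w - u) \<le> R"
  have R0: "\<bar>R + 1\<bar> > R" by arith
  obtain q where q: "q \<in> W" "\<bar>fst q - fst u\<bar> > R" "\<bar>snd q - snd u\<bar> > R"
  proof (cases "\<bar>fst w - fst u\<bar> > R")
    case True
    have "(fst w, snd u + R + 1) \<in> W" using vline[OF R w(1) True] .
    then show ?thesis using that True R0 by fastforce
  next
    case False
    then have "\<bar>snd w - snd u\<bar> > R" using w(2) by (auto simp: normInf_def)
    then have "(fst u + R + 1, snd w) \<in> W" using hline[OF R w(1)] by blast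
    then show ?thesis using that \<open>\<bar>snd w - snd u\<bar> > R\<close> R0 by fastforce
  qed
  have allout: "z \<in> W" if "normInf (z - u) > R" for z
  proof (cases "\<bar>fst z - fst u\<bar> > R")
    case True
    have "(fst z, snd q) \<in> W" using hline[OF R q(1) q(3)] by blast
    then have "(fst z, snd z) \<in> W" using vline[OF R, of "(fst z, snd q)" "snd z"] True by simp
    then show ?thesis by simp
  next
    case False
    then have t: "\<bar>snd z - snd u\<bar> > R" using that by (auto simp: normInf_def)
    have "(fst q, snd z) \<in> W" using vline[OF R q(1) q(2)] by blast
    then have "(fst z, snd z) \<in> W" using hline[OF R, of "(fst q, snd z)" "fst z"] t by simp
    then show ?thesis by simp
  qed
  have "C \<subseteq> {z. normInf (z - u) \<le> R}"
    using allout W_notC by (meson mem_Collect_eq not_le subsetI)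
  then have "finite C" using box_finite finite_subset by blast
  then show False using C_inf by blast
qed

lemma far_pair:
  assumes v: "v \<in> W"
  shows "\<exists>r y. r \<in> bd \<and> y \<in> bd \<and> normInf (y - r) \<ge> normInf (v - u) \<and> normInf (y - r) \<ge> normInf (r - u)"
proof (cases "\<exists>R. \<forall>w\<in>bd. normInf (w - u) \<le> R")
  case False
  then obtain r where r: "r \<in> bd" by (metis empty_iff)
  from False obtain y where y: "y \<in> bd" "\<not> normInf (y - u) \<le> normInf (v - u) + 2 * normInf (r - u)"
    by blast
  have "normInf (y - u) \<le> normInf (y - r) + normInf (r - u)" by (rule normInf_minus_tri)
  then show ?thesis using r y normInf_ge0[of "v - u"] normInf_ge0[of "r - u"]
    by (intro exI[of _ r] exI[of _ y]) auto
next
  case True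
  then obtain R where R: "\<And>w. w \<in> bd \<Longrightarrow> normInf (w - u) \<le> R" by blast
  have fin: "finite W" using W_bounded[OF R] box_finite[of u R]
    by (meson finite_subset mem_Collect_eq subsetI)
  have ne: "W \<noteq> {}" using u_W by blast
  define a where "a = Min (fst ` W)"
  define b where "b = Max (fst ` W)"
  define c where "c = Min (snd ` W)"
  define e where "e = Max (snd ` W)"
  have bnd: "a \<le> fst p" "fst p \<le> b" "c \<le> snd p" "snd p \<le> e" if "p \<in> W" for p
    using that fin unfolding a_def b_def c_def e_def by auto
  obtain wa where wa: "wa \<in> W" "fst wa = a" unfolding a_def using fin ne Min_in
    by (metis (no_types, lifting) finite_imageI image_iff image_is_empty)
  obtain wb where wb: "wb \<in> W" "fst wb = b" unfolding b_def using fin ne Max_in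
    by (metis (no_types, lifting) finite_imageI image_iff image_is_empty)
  obtain wc where wc: "wc \<in> W" "snd wc = c" unfolding c_def using fin ne Min_in
    by (metis (no_types, lifting) finite_imageI image_iff image_is_empty)
  obtain we where we: "we \<in> W" "snd we = e" unfolding e_def using fin ne Max_in
    by (metis (no_types, lifting) finite_imageI image_iff image_is_empty)
  have inbd: "p \<in> bd" if "p \<in> W" "q \<notin> W" "sq_adj p q" for p q
    using K[OF that] that by (auto simp: bd_def)
  have "wa \<in> bd" using inbd[OF wa(1), of "(a - 1, snd wa)"] bnd[of "(a - 1, snd wa)"] wa
    by (force simp: sq_adj_def norm1_def)
  moreover have "wb \<in> bd" using inbd[OF wb(1), of "(b + 1, snd wb)"] bnd[of "(b + 1, snd wb)"] wb
    by (force simp: sq_adj_def norm1_def)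
  moreover have "wc \<in> bd" using inbd[OF wc(1), of "(fst wc, c - 1)"] bnd[of "(fst wc, c - 1)"] wc
    by (force simp: sq_adj_def norm1_def)
  moreover have "we \<in> bd" using inbd[OF we(1), of "(fst we, e + 1)"] bnd[of "(fst we, e + 1)"] we
    by (force simp: sq_adj_def norm1_def)
  moreover have dle: "normInf (p - q) \<le> max (b - a) (e - c)" if "p \<in> W" "q \<in> W" for p q
    using bnd[OF that(1)] bnd[OF that(2)] by (auto simp: normInf_def)
  moreover have "normInf (wb - wa) \<ge> b - a" using wa wb by (auto simp: normInf_def)
  moreover have "normInf (we - wc) \<ge> e - c" using wc we by (auto simp: normInf_def)
  ultimately show ?thesis
    using dle[OF v u_W] dle[OF wa(1) u_W] dle[OF wc(1) u_W]
    by (cases "b - a \<ge> e - c") (metis max_def order_trans)+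
qed

end

lemma rt_list: "R\<^sup>*\<^sup>* a b \<Longrightarrow> \<exists>q. successively R q \<and> q \<noteq> [] \<and> hd q = a \<and> last q = b"
proof (induction rule: rtranclp_induct)
  case base then show ?case by (intro exI[of _ "[a]"]) simp
next
  case (step b c)
  then obtain q where q: "successively R q" "q \<noteq> []" "hd q = a" "last q = b" by blast
  then have "successively R (q @ [c])" using step(2) by (simp add: successively_append_iff)
  then show ?case using q by (intro exI[of _ "q @ [c]"]) simp
qed

lemma a1: "successively R q \<Longrightarrow> q = xs @ [y] @ ys @ [y] @ zs \<Longrightarrow> successively R ((xs @ [y]) @ (ys @ [y] @ zs))"
  by (simp only: append_assoc)
lemma a2: "successively R q \<Longrightarrow> q = xs @ [y] @ ys @ [y] @ zs \<Longrightarrow> successively R ((xs @ [y] @ ys) @ ([y] @ zs))"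
  by (simp only: append_assoc)
lemma a3: "successively R (xs @ [y]) \<Longrightarrow> successively R (y # zs) \<Longrightarrow> successively R ((xs @ [y]) @ zs)"
proof -
  assume s: "successively R (xs @ [y])" "successively R (y # zs)"
  have "zs = [] \<or> R y (hd zs) \<and> successively R zs" using s(2) by (simp only: successively_Cons)
  then have "successively R (xs @ [y]) \<and> successively R zs \<and> (xs @ [y] = [] \<or> zs = [] \<or> R (last (xs @ [y])) (hd zs))"
    using s(1) by auto
  then show ?thesis by (subst successively_append_iff)
qed
lemma distinct_path:
  "successively R q \<Longrightarrow> q \<noteq> [] \<Longrightarrow> \<exists>q'. successively R q' \<and> q' \<noteq> [] \<and> hd q' = hd q \<and> last q' = last q \<and> distinct q' \<and> set q' \<subseteq> set q"
proof (induction "length q" arbitrary: q rule: less_induct)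
  case less
  show ?case
  proof (cases "distinct q")
    case True then show ?thesis using less.prems by blast
  next
    case False
    then obtain xs ys zs y where q: "q = xs @ [y] @ ys @ [y] @ zs" using not_distinct_decomp by blast
    define q1 where "q1 = xs @ [y] @ zs"
    have h1: "successively R ((xs @ [y]) @ (ys @ [y] @ zs))" by (rule a1[OF less.prems(1) q])
    have h2: "successively R ((xs @ [y] @ ys) @ ([y] @ zs))" by (rule a2[OF less.prems(1) q])
    have s1: "successively R (xs @ [y])"
      using successively_append_iff[THEN iffD1, OF h1] by blast
    have s2: "successively R ([y] @ zs)"
      using successively_append_iff[THEN iffD1, OF h2] by blast
    have "successively R ((xs @ [y]) @ zs)" using a3[OF s1] s2 by simp
    then have sq1: "successively R q1" unfolding q1_def by simp
    have h: "hd q1 = hd q" unfolding q1_def q by (cases xs) simp_all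
    have l: "last q1 = last q" unfolding q1_def q by (cases "zs = []") simp_all
    have len: "length q1 < length q" unfolding q1_def q by simp
    have st: "set q1 \<subseteq> set q" unfolding q1_def q by auto
    have ne: "q1 \<noteq> []" unfolding q1_def by simp
    obtain q' where q': "successively R q'" "q' \<noteq> []" "hd q' = hd q1" "last q' = last q1" "distinct q'" "set q' \<subseteq> set q1"
      using less.hyps[OF len sq1 ne] by blast
    show ?thesis
      by (rule exI[of _ q']) (use q' h l st in auto)
  qed
qed

lemma succ_split:
  "successively (\<lambda>a b. P a \<and> P b \<and> Q a b) q \<Longrightarrow> q \<noteq> [] \<Longrightarrow> P (hd q) \<Longrightarrow> (\<forall>x\<in>set q. P x) \<and> successively Q q"
proof (induction q rule: induct_list012)
  case 1 then show ?case by simp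
next
  case (2 x) then show ?case by simp
next
  case (3 x y zs)
  have a: "P x" "P y" "Q x y" "successively (\<lambda>a b. P a \<and> P b \<and> Q a b) (y # zs)"
    using "3.prems" by simp_all
  have "(\<forall>x\<in>set (y # zs). P x) \<and> successively Q (y # zs)"
    using "3.IH"(2)[OF a(4)] a(2) by simp
  then show ?case using a by simp
qed

lemma succ_len: "successively bx_adj q \<Longrightarrow> q \<noteq> [] \<Longrightarrow> normInf (last q - hd q) \<le> int (length q) - 1"
proof (induction q)
  case Nil then show ?case by simp
next
  case (Cons x q)
  show ?case
  proof (cases q)
    case Nil then show ?thesis by (simp add: normInf_def)
  next
    case (Cons y q')
    have bxy: "bx_adj x y" and sq: "successively bx_adj q" using Cons.prems \<open>q = y # q'\<close> by auto
    have ih: "normInf (last q - hd q) \<le> int (length q) - 1" using Cons.IH sq \<open>q = y # q'\<close> by blast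
    have "normInf (x - y) = 1" using bxy by (simp add: bx_adj_def)
    then have b: "normInf (hd q - x) \<le> 1" using normInf_sym[of y x] \<open>q = y # q'\<close> by simp
    have t: "normInf (last q - x) \<le> normInf (last q - hd q) + normInf (hd q - x)"
      by (rule normInf_minus_tri)
    have e: "last (x # q) = last q" "hd (x # q) = x" "length (x # q) = Suc (length q)"
      using \<open>q = y # q'\<close> by simp_all
    show ?thesis unfolding e using ih b t by linarith
  qed
qed

definition G :: "pt \<Rightarrow> nat \<Rightarrow> pt list set" where
  "G r m = {q. length q = Suc m \<and> hd q = r \<and> successively bx_adj q}"
definition F :: "pt \<Rightarrow> nat \<Rightarrow> pt list set" where
  "F r m = {q. length q = Suc m \<and> hd q = r \<and> successively bx_adj q \<and> distinct q}"

lemma nb_card: "finite {s. bx_adj r s} \<and> card {s. bx_adj r s} \<le> 8"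
proof -
  define A where "A = {fst r - 1 .. fst r + 1} \<times> {snd r - 1 .. snd r + 1}"
  have sub: "{s. bx_adj r s} \<subseteq> A - {r}"
    unfolding A_def by (auto simp: bx_adj_def normInf_def)
  have c9: "card A = 9" unfolding A_def by (simp add: card_cartesian_product)
  have rA: "r \<in> A" unfolding A_def by (cases r) auto
  have fA: "finite A" unfolding A_def by simp
  have c8: "card (A - {r}) = 8" using c9 rA fA by (simp add: card_Diff_singleton)
  have f: "finite (A - {r})" using fA by simp
  have f2: "finite {s. bx_adj r s}" using sub f by (rule finite_subset)
  have c: "card {s. bx_adj r s} \<le> card (A - {r})" using f sub by (rule card_mono)
  show ?thesis using f2 c c8 by linarith
qed

lemma G_card: "finite (G r m) \<and> card (G r m) \<le> 8 ^ m"
proof (induction m arbitrary: r)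
  case 0
  have "q \<in> G r 0 \<longleftrightarrow> q = [r]" for q
  proof
    assume "q \<in> G r 0" then have "length q = 1" "hd q = r" by (simp_all add: G_def)
    then show "q = [r]" by (cases q) auto
  next
    assume "q = [r]" then show "q \<in> G r 0" by (simp add: G_def)
  qed
  then have "G r 0 = {[r]}" by blast
  then show ?case by simp
next
  case (Suc m)
  let ?N = "{s. bx_adj r s}"
  have sub: "G r (Suc m) \<subseteq> (\<Union>s\<in>?N. (Cons r) ` G s m)"
  proof
    fix q assume "q \<in> G r (Suc m)"
    then have l: "length q = Suc (Suc m)" and h: "hd q = r" and s: "successively bx_adj q"
      by (simp_all add: G_def)
    obtain x y rest where q: "q = x # y # rest" using l by (cases q; cases "tl q") auto
    have x: "x = r" using h q by simp
    have a: "bx_adj r y" "successively bx_adj (y # rest)" using s q x by simp_all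
    have "length (y # rest) = Suc m" using l q by simp
    then have "y # rest \<in> G y m" using a unfolding G_def by simp
    then show "q \<in> (\<Union>s\<in>?N. (Cons r) ` G s m)" using q x a by blast
  qed
  have fin: "finite (\<Union>s\<in>?N. (Cons r) ` G s m)" using nb_card Suc.IH by blast
  have "card (\<Union>s\<in>?N. (Cons r) ` G s m) \<le> (\<Sum>s\<in>?N. card ((Cons r) ` G s m))"
    using nb_card card_UN_le by blast
  also have "\<dots> \<le> (\<Sum>s\<in>?N. 8 ^ m)"
  proof (rule sum_mono)
    fix s
    have "card ((Cons r) ` G s m) \<le> card (G s m)" using Suc.IH[of s] card_image_le by blast
    then show "card ((Cons r) ` G s m) \<le> 8 ^ m" using Suc.IH[of s] by linarith
  qed
  also have "\<dots> \<le> 8 * 8 ^ m" using nb_card by simp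
  finally have c1: "card (\<Union>s\<in>?N. (Cons r) ` G s m) \<le> 8 * 8 ^ m" .
  have f: "finite (G r (Suc m))" using sub fin by (rule finite_subset)
  have "card (G r (Suc m)) \<le> card (\<Union>s\<in>?N. (Cons r) ` G s m)" by (rule card_mono[OF fin sub])
  then show ?case using f c1 by simp
qed

lemma F_card: "finite (F r m) \<and> card (F r m) \<le> 8 ^ m"
proof -
  have "F r m \<subseteq> G r m" unfolding F_def G_def by auto
  moreover have "finite (G r m)" "card (G r m) \<le> 8 ^ m" using G_card[of r m] by simp_all
  ultimately have "finite (F r m)" "card (F r m) \<le> card (G r m)"
    using finite_subset card_mono by blast+
  then show ?thesis using \<open>card (G r m) \<le> 8 ^ m\<close> by simp
qed

lemma F_set_card: "q \<in> F r m \<Longrightarrow> card (set q) = Suc m"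
  unfolding F_def by (simp add: distinct_card)

context setting begin

lemma walk_exists:
  assumes v: "v \<in> W" and k: "normInf (v - u) \<ge> int k"
  shows "\<exists>r q. q \<in> F r (max k (nat (normInf (r - u)))) \<and> set q \<subseteq> Bs"
proof -
  obtain r y where ry: "r \<in> bd" "y \<in> bd" "normInf (y - r) \<ge> normInf (v - u)" "normInf (y - r) \<ge> normInf (r - u)"
    using far_pair[OF v] by blast
  define m where "m = max k (nat (normInf (r - u)))"
  have my: "int m \<le> normInf (y - r)" unfolding m_def using ry k normInf_ge0[of "r - u"] by auto
  obtain q0 where q0: "successively (\<lambda>a b. a \<in> bd \<and> b \<in> bd \<and> bx_adj a b) q0" "q0 \<noteq> []" "hd q0 = r" "last q0 = y"
    using rt_list[OF bd_conn[OF ry(1) ry(2)]] by blast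
  from distinct_path[OF q0(1,2)] obtain q where q': "successively (\<lambda>a b. a \<in> bd \<and> b \<in> bd \<and> bx_adj a b) q"
    "q \<noteq> []" "hd q = hd q0" "last q = last q0" "distinct q"
    by blast
  have q: "successively (\<lambda>a b. a \<in> bd \<and> b \<in> bd \<and> bx_adj a b) q" "q \<noteq> []" "hd q = r" "last q = y"
    "distinct q" using q' q0 by simp_all
  have qs: "\<forall>x\<in>set q. x \<in> bd" "successively bx_adj q"
    using succ_split[of "\<lambda>a. a \<in> bd" bx_adj q] q ry(1) by auto
  have "normInf (y - r) \<le> int (length q) - 1" using succ_len[OF qs(2) q(2)] q by simp
  then have len: "Suc m \<le> length q" using my by linarith
  define q' where "q' = take (Suc m) q"
  have "successively bx_adj q'"
    using qs(2) unfolding q'_def by (metis append_take_drop_id successively_append_iff)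
  moreover have "length q' = Suc m" using len unfolding q'_def by simp
  moreover have "hd q' = r" using q unfolding q'_def by (cases q) auto
  moreover have "distinct q'" using q(5) unfolding q'_def by simp
  ultimately have "q' \<in> F r m" unfolding F_def by simp
  moreover have "set q' \<subseteq> Bs"
  proof
    fix x assume "x \<in> set q'"
    then have "x \<in> set q" unfolding q'_def using set_take_subset by fast
    then have "x \<in> bd" using qs(1) by blast
    then show "x \<in> Bs" using bd_B by blast
  qed
  ultimately have "q' \<in> F r m \<and> set q' \<subseteq> Bs" by blast
  then show ?thesis unfolding m_def by blast
qed

end

context setting begin
lemma path_in_W: "successively bx_adj p \<Longrightarrow> p \<noteq> [] \<Longrightarrow> hd p \<in> W \<Longrightarrow> (\<forall>z\<in>set p. z \<notin> C) \<Longrightarrow> \<forall>z\<in>set p. z \<in> W"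
proof (induction p rule: induct_list012)
  case 1 then show ?case by simp
next
  case (2 x) then show ?case by simp
next
  case (3 x y zs)
  have a: "bx_adj x y" "successively bx_adj (y # zs)" "x \<in> W" "y \<notin> C" using "3.prems" by simp_all
  have "y \<in> W" using W_step[OF a(3) a(4) a(1)] .
  then have "\<forall>z\<in>set (y # zs). z \<in> W" using "3.IH"(2) a(2) "3.prems"(4) by simp
  then show ?case using a(3) by simp
qed
end

lemma pointwise:
  assumes x: "x \<notin> Bs" and inf: "infinite (component sq_adj (- Bs) x)"
    and sub: "component sq_adj (- Bs) x \<subseteq> Ps"
    and p: "bx_path_avoiding Ps p" "hd p = u" "normInf (last p - u) \<ge> int k"
  shows "\<exists>r q. q \<in> F r (max k (nat (normInf (r - u)))) \<and> set q \<subseteq> Bs"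
proof -
  define C where "C = component sq_adj (- Bs) x"
  have pa: "p \<noteq> []" "\<forall>z\<in>set p. z \<notin> Ps" "successively bx_adj p"
    using p(1) by (auto simp: bx_path_avoiding_def)
  have uC: "u \<notin> C" using pa p(2) sub hd_in_set[OF pa(1)] unfolding C_def by blast
  have xB: "x \<in> - Bs" using x by simp
  interpret setting Bs C u x
  proof
    show "infinite C" using inf C_def by simp
    show "x \<in> C" by (simp add: C_def comp_self)
    show "\<And>z. z \<in> C \<Longrightarrow> (\<lambda>a b. a \<in> C \<and> b \<in> C \<and> sq_adj a b)\<^sup>*\<^sup>* x z"
      unfolding C_def using comp_within[OF _ xB] by blast
    show "\<And>w c. c \<in> C \<Longrightarrow> w \<notin> C \<Longrightarrow> sq_adj c w \<Longrightarrow> w \<in> Bs"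
      unfolding C_def using comp_step[OF _ xB] by blast
    show "u \<notin> C" by (rule uC)
  qed
  have "\<forall>z\<in>set p. z \<notin> C" using pa(2) sub C_def by blast
  then have "\<forall>z\<in>set p. z \<in> W" using path_in_W[OF pa(3) pa(1)] u_W p(2) by simp
  then have "last p \<in> W" using last_in_set[OF pa(1)] by blast
  then show ?thesis using walk_exists p(3) by blast
qed

lemma ring_card: "finite {r::pt. normInf (r - u) = int j} \<and> card {r::pt. normInf (r - u) = int j} \<le> 8 * j + 1"
proof -
  define bx where "bx i = {fst u - int i .. fst u + int i} \<times> {snd u - int i .. snd u + int i}" for i
  have fb: "finite (bx i)" for i unfolding bx_def by simp
  have n: "nat (2 * int i + 1) = 2 * i + 1" for i using nat_int[of "2*i+1"] by simp
  have c1: "card {c - int i .. c + int i} = 2 * i + 1" for c :: int and i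
    using n[of i] by simp
  have cb: "card (bx i) = (2 * i + 1) * (2 * i + 1)" for i
    unfolding bx_def card_cartesian_product c1 by simp
  have rb: "{r::pt. normInf (r - u) = int j} \<subseteq> bx j" unfolding bx_def by (auto simp: normInf_def)
  show ?thesis
  proof (cases j)
    case 0
    then show ?thesis using rb fb[of j] cb[of j] card_mono[OF fb rb] finite_subset[OF rb fb] by simp
  next
    case (Suc i)
    have rb2: "{r::pt. normInf (r - u) = int j} \<subseteq> bx j - bx i"
      unfolding bx_def using Suc by (auto simp: normInf_def)
    have sb: "bx i \<subseteq> bx j" unfolding bx_def using Suc by auto
    have "card (bx j - bx i) = card (bx j) - card (bx i)" using card_Diff_subset[OF fb sb] .
    also have "\<dots> = 8 * j" unfolding cb Suc by (simp add: algebra_simps)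
    finally have "card (bx j - bx i) = 8 * j" .
    moreover have fd: "finite (bx j - bx i)" using fb by simp
    have f2: "finite {r::pt. normInf (r - u) = int j}" using rb2 fd by (rule finite_subset)
    have "card {r::pt. normInf (r - u) = int j} \<le> card (bx j - bx i)" using fd rb2 by (rule card_mono)
    then show ?thesis using f2 calculation by simp
  qed
qed

lemma lin_exp: "8 * real j + 1 \<le> 8 * (3/2) ^ j"
proof (induction j)
  case 0 then show ?case by simp
next
  case (Suc j)
  show ?case
  proof (cases "j \<le> 1")
    case True then have "j = 0 \<or> j = 1" by auto
    then show ?thesis by auto
  next
    case False
    then have "(3/2::real) ^ 2 \<le> (3/2) ^ j" by (intro power_increasing) auto
    then have "(9/4::real) \<le> (3/2) ^ j" by (simp add: power2_eq_square)
    then show ?thesis using Suc.IH by simp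
  qed
qed

lemma key_pow:
  assumes "0 \<le> e" "e \<le> 1/21" "k \<le> L"
  shows "(8::real) ^ L * e ^ Suc L \<le> (8/21) ^ L * 21 ^ k * e ^ Suc k"
proof -
  obtain t where L: "L = k + t" using assms(3) le_Suc_ex by blast
  have "e ^ t \<le> (1/21) ^ t" using assms by (intro power_mono) auto
  then have "(8::real) ^ L * e ^ Suc L = 8 ^ L * e ^ t * e ^ Suc k"
    by (simp add: L power_add)
  also have "\<dots> \<le> 8 ^ L * (1/21) ^ t * e ^ Suc k"
    using \<open>e ^ t \<le> (1/21) ^ t\<close> assms by (intro mult_right_mono mult_left_mono) auto
  also have "8 ^ L * (1/21::real) ^ t = (8/21) ^ L * 21 ^ k"
    by (simp add: L power_add power_divide field_simps)
  finally show ?thesis by simp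
qed

lemma main_bound:
  fixes M :: "'a measure" and B \<Psi> :: "'a \<Rightarrow> pt set" and \<epsilon> d :: real and u :: pt
  assumes P: "prob_space M" and rare: "rare M \<epsilon> B" and e0: "0 \<le> \<epsilon>" "\<epsilon> \<le> 1/21"
    and ae: "AE \<omega> in M. \<exists>x. x \<notin> B \<omega> \<and> infinite (component sq_adj (- B \<omega>) x) \<and> component sq_adj (- B \<omega>) x \<subseteq> \<Psi> \<omega>"
    and d: "d \<ge> 0"
  shows "measure M {\<omega> \<in> space M. \<exists>p. bx_path_avoiding (\<Psi> \<omega>) p \<and> hd p = u
            \<and> real_of_int (normInf (last p - u)) \<ge> d} \<le> (21 * \<epsilon>) ^ Suc (nat \<lceil>d\<rceil>)"
proof -
  interpret prob_space M by (rule P)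
  define k where "k = nat \<lceil>d\<rceil>"
  define E where "E = {\<omega> \<in> space M. \<exists>p. bx_path_avoiding (\<Psi> \<omega>) p \<and> hd p = u
            \<and> real_of_int (normInf (last p - u)) \<ge> d}"
  define Yr where "Yr r m = {\<omega> \<in> space M. \<exists>q\<in>F r m. set q \<subseteq> B \<omega>}" for r m
  define ring where "ring j = {r::pt. normInf (r - u) = int j}" for j
  define Y where "Y j = (\<Union>r\<in>ring j. Yr r (max k j))" for j
  define K where "K = 8 * 21 ^ k * \<epsilon> ^ Suc k"
  define g where "g j = K * (4/7) ^ j" for j :: nat
  have K0: "K \<ge> 0" unfolding K_def using e0 by simp
  have rs: "random_set M B" and rb: "\<And>A. finite A \<Longrightarrow> measure M {\<omega> \<in> space M. A \<subseteq> B \<omega>} \<le> \<epsilon> ^ card A"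
    using rare by (auto simp: rare_def)
  have Ameas: "{\<omega> \<in> space M. A \<subseteq> B \<omega>} \<in> sets M" if "finite A" for A
  proof -
    have "{\<omega> \<in> space M. \<forall>z\<in>A. z \<in> B \<omega>} \<in> sets M"
      using rs that by (intro sets.sets_Collect_finite_All) (auto simp: random_set_def)
    moreover have "{\<omega> \<in> space M. \<forall>z\<in>A. z \<in> B \<omega>} = {\<omega> \<in> space M. A \<subseteq> B \<omega>}" by blast
    ultimately show ?thesis by simp
  qed
  have Yr_eq: "Yr r m = (\<Union>q\<in>F r m. {\<omega> \<in> space M. set q \<subseteq> B \<omega>})" for r m unfolding Yr_def by auto
  have Yr_meas: "Yr r m \<in> sets M" for r m
    unfolding Yr_eq using F_card[of r m] Ameas by (intro sets.finite_UN) auto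
  have Yr_bound: "measure M (Yr r m) \<le> 8 ^ m * \<epsilon> ^ Suc m" for r m
  proof -
    have "measure M (Yr r m) \<le> (\<Sum>q\<in>F r m. measure M {\<omega> \<in> space M. set q \<subseteq> B \<omega>})"
      unfolding Yr_eq using F_card[of r m] Ameas by (intro measure_UNION_le) auto
    also have "\<dots> \<le> (\<Sum>q\<in>F r m. \<epsilon> ^ Suc m)"
    proof (rule sum_mono)
      fix q assume "q \<in> F r m"
      then show "measure M {\<omega> \<in> space M. set q \<subseteq> B \<omega>} \<le> \<epsilon> ^ Suc m"
        using rb[of "set q"] F_set_card[of q r m] by simp
    qed
    also have "\<dots> = real (card (F r m)) * \<epsilon> ^ Suc m" by simp
    also have "\<dots> \<le> 8 ^ m * \<epsilon> ^ Suc m"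
    proof (rule mult_right_mono)
      have "card (F r m) \<le> 8 ^ m" using F_card[of r m] by simp
      then have "real (card (F r m)) \<le> real (8 ^ m)" by (rule of_nat_mono)
      then show "real (card (F r m)) \<le> 8 ^ m" by simp
    qed (use e0 in simp)
    finally show ?thesis .
  qed
  have ringf: "finite (ring j)" for j unfolding ring_def using ring_card[of u j] by simp
  have Y_meas: "Y j \<in> sets M" for j unfolding Y_def using ringf Yr_meas by (intro sets.finite_UN) auto
  have Y_g: "measure M (Y j) \<le> g j" for j
  proof -
    let ?L = "max k j"
    have q: "(3/2::real) ^ j * (8/21) ^ j = (4/7) ^ j" by (simp add: power_mult_distrib[symmetric])
    have p0: "0 \<le> (8/21::real) ^ j * 21 ^ k * \<epsilon> ^ Suc k" using e0 by simp
    have "measure M (Y j) \<le> (\<Sum>r\<in>ring j. measure M (Yr r ?L))"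
      unfolding Y_def using ringf Yr_meas by (intro measure_UNION_le) auto
    also have "\<dots> \<le> (\<Sum>r\<in>ring j. 8 ^ ?L * \<epsilon> ^ Suc ?L)" by (intro sum_mono Yr_bound)
    also have "\<dots> = real (card (ring j)) * (8 ^ ?L * \<epsilon> ^ Suc ?L)" by simp
    also have "\<dots> \<le> (8 * real j + 1) * ((8/21) ^ ?L * 21 ^ k * \<epsilon> ^ Suc k)"
    proof (rule mult_mono)
      have "card (ring j) \<le> 8 * j + 1" using ring_card[of u j] unfolding ring_def by simp
      then have "real (card (ring j)) \<le> real (8 * j + 1)" by (rule of_nat_mono)
      then show "real (card (ring j)) \<le> 8 * real j + 1" by simp
      show "8 ^ ?L * \<epsilon> ^ Suc ?L \<le> (8/21) ^ ?L * 21 ^ k * \<epsilon> ^ Suc k"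
        by (rule key_pow[OF e0]) simp
    qed (use e0 p0 in \<open>auto simp: zero_le_mult_iff\<close>)
    also have "\<dots> \<le> (8 * real j + 1) * ((8/21) ^ j * 21 ^ k * \<epsilon> ^ Suc k)"
    proof (rule mult_left_mono)
      have "(8/21::real) ^ ?L \<le> (8/21) ^ j" by (rule power_decreasing) auto
      then show "(8/21) ^ ?L * 21 ^ k * \<epsilon> ^ Suc k \<le> (8/21) ^ j * 21 ^ k * \<epsilon> ^ Suc k"
        using e0 by (intro mult_right_mono) auto
    qed simp
    also have "\<dots> \<le> (8 * (3/2) ^ j) * ((8/21) ^ j * 21 ^ k * \<epsilon> ^ Suc k)"
      using lin_exp[of j] p0 by (rule mult_right_mono)
    also have "\<dots> = g j" unfolding g_def K_def using q by (simp add: algebra_simps)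
    finally show ?thesis .
  qed
  have sg: "summable g" unfolding g_def by (intro summable_mult summable_geometric) simp
  have sumg: "suminf g = K * (7/3)" unfolding g_def
    by (simp add: suminf_mult summable_geometric suminf_geometric)
  have Kb: "K * (7/3) \<le> (21 * \<epsilon>) ^ Suc k"
  proof -
    define X where "X = (21::real) ^ k * \<epsilon> ^ Suc k"
    have X0: "0 \<le> X" using e0 unfolding X_def by simp
    have "K * (7/3) = (56/3) * X" unfolding K_def X_def by simp
    then have "K * (7/3) \<le> 21 * X" using X0 by linarith
    then have "K * (7/3) \<le> 21 * (21 ^ k * \<epsilon> ^ Suc k)" unfolding X_def .
    also have "\<dots> = (21 * \<epsilon>) ^ Suc k" by (simp add: power_mult_distrib)
    finally show ?thesis .
  qed
  have sY: "summable (\<lambda>j. measure M (Y j))"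
    by (rule summable_comparison_test'[OF sg]) (use Y_g in simp)
  have UYm: "(\<Union>j. Y j) \<in> sets M" using Y_meas by blast
  have UY: "measure M (\<Union>j. Y j) \<le> (\<Sum>j. measure M (Y j))"
    by (rule finite_measure_subadditive_countably) (use Y_meas sY in auto)
  have "(\<Sum>j. measure M (Y j)) \<le> suminf g" by (rule suminf_le[OF Y_g sY sg])
  then have UYb: "measure M (\<Union>j. Y j) \<le> (21 * \<epsilon>) ^ Suc k" using UY sumg Kb by linarith
  from ae obtain N where N: "{\<omega> \<in> space M. \<not> (\<exists>x. x \<notin> B \<omega> \<and> infinite (component sq_adj (- B \<omega>) x) \<and> component sq_adj (- B \<omega>) x \<subseteq> \<Psi> \<omega>)} \<subseteq> N"
    "emeasure M N = 0" "N \<in> sets M" by (rule AE_E)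
  have sub: "E \<subseteq> N \<union> (\<Union>j. Y j)"
  proof
    fix \<omega> assume w: "\<omega> \<in> E"
    show "\<omega> \<in> N \<union> (\<Union>j. Y j)"
    proof (cases "\<omega> \<in> N")
      case True then show ?thesis by blast
    next
      case False
      have ws: "\<omega> \<in> space M" using w E_def by blast
      then obtain x where x: "x \<notin> B \<omega>" "infinite (component sq_adj (- B \<omega>) x)" "component sq_adj (- B \<omega>) x \<subseteq> \<Psi> \<omega>"
        using False N(1) by blast
      obtain p where p: "bx_path_avoiding (\<Psi> \<omega>) p" "hd p = u" "real_of_int (normInf (last p - u)) \<ge> d"
        using w E_def by blast
      have "\<lceil>d\<rceil> \<le> normInf (last p - u)" using p(3) by (simp add: ceiling_le_iff)
      moreover have "int k = \<lceil>d\<rceil>" unfolding k_def using d by simp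
      ultimately have pk: "normInf (last p - u) \<ge> int k" by simp
      obtain r q where rq: "q \<in> F r (max k (nat (normInf (r - u))))" "set q \<subseteq> B \<omega>"
        using pointwise[OF x p(1) p(2) pk] by blast
      define j where "j = nat (normInf (r - u))"
      have "r \<in> ring j" unfolding ring_def j_def using normInf_ge0[of "r - u"] by simp
      then have "\<omega> \<in> Y j" unfolding Y_def Yr_def using ws rq j_def by blast
      then show ?thesis by blast
    qed
  qed
  show ?thesis
  proof (cases "E \<in> sets M")
    case False then have "measure M E = 0" by (simp add: measure_notin_sets)
    then show ?thesis using e0 unfolding E_def k_def by simp
  next
    case True
    have "measure M E \<le> measure M (N \<union> (\<Union>j. Y j))"
      by (rule finite_measure_mono[OF sub]) (use N UYm in blast)
    also have "\<dots> \<le> measure M N + measure M (\<Union>j. Y j)"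
      by (rule measure_Un_le) (use N UYm in auto)
    also have "measure M N = 0" using N(2) by (simp add: measure_def)
    finally show ?thesis using UYb unfolding E_def k_def by simp
  qed
qed

theorem lemma6p4:
  fixes M :: "'a measure" and \<Psi> :: "'a \<Rightarrow> (int \<times> int) set" and u :: "int \<times> int" and d :: real
  assumes "prob_space M"
    and "random_set M \<Psi>"
    and "d \<ge> 0"
  shows "measure M {\<omega> \<in> space M. \<exists>p. bx_path_avoiding (\<Psi> \<omega>) p \<and> hd p = u
            \<and> real_of_int (normInf (last p - u)) \<ge> d}
         \<le> (perc M \<Psi> / eps0) powr (1 + d)"
proof -
  interpret prob_space M by (rule assms(1))
  define E where "E = {\<omega> \<in> space M. \<exists>p. bx_path_avoiding (\<Psi> \<omega>) p \<and> hd p = u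
            \<and> real_of_int (normInf (last p - u)) \<ge> d}"
  define S where "S = {\<epsilon>. \<epsilon> \<ge> 0 \<and> strongly_percolating M \<epsilon> \<Psi>}"
  define m where "m = measure M E"
  define a where "a = 1 + d"
  have a0: "a > 0" using assms(3) a_def by simp
  have m0: "0 \<le> m" "m \<le> 1" unfolding m_def by (simp_all add: prob_le_1)
  have e0: "eps0 = 1/21" by (simp add: eps0_def)
  have bound: "m \<le> (\<epsilon> / eps0) powr a" if "\<epsilon> \<in> S" for \<epsilon>
  proof (cases "\<epsilon> \<ge> eps0")
    case True
    then have "1 \<le> \<epsilon> / eps0" using e0 by simp
    then have "1 \<le> (\<epsilon> / eps0) powr a" using a0 by (intro ge_one_powr_ge_zero) auto
    then show ?thesis using m0 by linarith
  next
    case False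
    have eps: "0 \<le> \<epsilon>" "strongly_percolating M \<epsilon> \<Psi>" using that S_def by auto
    then obtain B where B: "rare M \<epsilon> B"
      "AE \<omega> in M. \<exists>x. x \<notin> B \<omega> \<and> infinite (component sq_adj (- B \<omega>) x) \<and> component sq_adj (- B \<omega>) x \<subseteq> \<Psi> \<omega>"
      using False unfolding strongly_percolating_def by auto
    have le: "\<epsilon> \<le> 1/21" using False e0 by simp
    have mb: "m \<le> (21 * \<epsilon>) ^ Suc (nat \<lceil>d\<rceil>)"
      unfolding m_def E_def by (rule main_bound[OF assms(1) B(1) eps(1) le B(2) assms(3)])
    define x where "x = \<epsilon> / eps0"
    have x: "x = 21 * \<epsilon>" "0 \<le> x" "x \<le> 1" unfolding x_def e0 using eps(1) le by simp_all
    have ex: "a \<le> real (Suc (nat \<lceil>d\<rceil>))" unfolding a_def using assms(3)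
      by (simp add: of_nat_nat)
    have "x ^ Suc (nat \<lceil>d\<rceil>) \<le> x powr a"
    proof (cases "x = 0")
      case True then show ?thesis by simp
    next
      case False
      then have "0 < x" using x by simp
      then have "x ^ Suc (nat \<lceil>d\<rceil>) = x powr real (Suc (nat \<lceil>d\<rceil>))" by (rule powr_realpow[symmetric])
      also have "\<dots> \<le> x powr a" using x ex by (intro powr_mono') auto
      finally show ?thesis .
    qed
    then show ?thesis using mb x(1) x_def by simp
  qed
  have Sne: "eps0 \<in> S" unfolding S_def strongly_percolating_def eps0_def by simp
  have "m powr (1/a) * eps0 \<le> Inf S"
  proof (rule cInf_greatest)
    show "S \<noteq> {}" using Sne by blast
    fix \<epsilon> assume "\<epsilon> \<in> S"
    then have h: "m \<le> (\<epsilon> / eps0) powr a" by (rule bound)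
    have "\<epsilon> \<ge> 0" using \<open>\<epsilon> \<in> S\<close> S_def by simp
    then have ge: "\<epsilon> / eps0 \<ge> 0" using e0 by simp
    have "m powr (1/a) \<le> ((\<epsilon> / eps0) powr a) powr (1/a)"
      using h m0 a0 by (intro powr_mono2) auto
    also have "\<dots> = (\<epsilon> / eps0) powr (a * (1/a))" by (rule powr_powr)
    also have "\<dots> = \<epsilon> / eps0"
    proof -
      have "a * (1/a) = 1" using a0 by simp
      then show ?thesis by (simp only: powr_one[OF ge])
    qed
    finally show "m powr (1/a) * eps0 \<le> \<epsilon>" using e0 by (simp add: field_simps)
  qed
  then have "m powr (1/a) \<le> perc M \<Psi> / eps0"
    unfolding perc_def S_def using e0 by (simp add: field_simps)
  then have "(m powr (1/a)) powr a \<le> (perc M \<Psi> / eps0) powr a"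
    using a0 by (intro powr_mono2) auto
  moreover have "(m powr (1/a)) powr a = m"
  proof -
    have "(m powr (1/a)) powr a = m powr ((1/a) * a)" by (rule powr_powr)
    also have "\<dots> = m" using a0 m0 by (simp add: powr_one)
    finally show ?thesis .
  qed
  ultimately show ?thesis unfolding m_def E_def a_def by simp
qed

end
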